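(* Let $\mathrm{Bool}_t$ assign to each finite set $X$ a subset $\mathrm{Bool}_t(X)\subseteq\mathrm{Bool}(X)$, stable under bijections ($f\circ\sigma^{-1}\in\mathrm{Bool}_t(X')$ for $f\in\mathrm{Bool}_t(X)$, $\sigma:X\to X'$ bijective), with $1\in\mathrm{Bool}_t(\emptyset)$, closed under $\star_1$ and under restrictions. Let $\mathcal{E}$ assign to each $f\in\mathrm{Bool}_t(X)$ a set $\mathcal{E}(f)$ of equivalence relations on $X$, compatible with bijections ($\mathcal{E}(f\circ\sigma^{-1})$ is the image of $\mathcal{E}(f)$ under transport by $\sigma$), such that $f/{\sim}\in\mathrm{Bool}_t(X/{\sim})$ for all $\sim\in\mathcal{E}(f)$. Assume: ($\star_1$) $\mathcal{E}(1)$ contains the equivalence on $\emptyset$, and $\mathcal{E}(f\star_1g)=\{\sim_X\sqcup\sim_Y\mid\sim_X\in\mathcal{E}(f),\ \sim_Y\in\mathcal{E}(g)\}$ for disjoint $X,Y$, $f\in\mathrm{Bool}_t(X)$, $g\in\mathrm{Bool}_t(Y)$; ($\delta$) for $f\in\mathrm{Bool}_t(X)$ and $\sim\subseteq\sim'$: ($\sim\in\mathcal{E}(f)$ and $\overline{\sim'}\in\mathcal{E}(f/{\sim})$) iff ($\sim'\in\mathcal{E}(f)$ and $\sim\in\mathcal{E}(f\mid\sim')$); ($\Delta$) for disjoint $X,Y$, $f\in\mathrm{Bool}_t(X\sqcup Y)$ and equivalences $\sim_X,\sim_Y$ on $X,Y$: $\sim_X\sqcup\sim_Y\in\mathcal{E}(f)$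 iff $\sim_X\in\mathcal{E}(f_{\mid X})$ and $\sim_Y\in\mathcal{E}(f_{\mid Y})$; ($\epsilon$) for $f\in\mathrm{Bool}_t(X)$: $=_X$ and $\sim_f^i$ belong to $\mathcal{E}(f)$; for $\sim\in\mathcal{E}(f)$, $f\mid\sim$ is modular iff $\sim$ is $=_X$; and $f/{\sim}$ is modular iff $\sim=\sim_f^i$. Then $\mathcal{E}(f)=\mathcal{E}^S(f)=\mathcal{E}^W(f)$ for every finite set $X$ and every $f\in\mathrm{Bool}_t(X)$.
   Context: A boolean function on a finite set $X$ is a map $f:\mathcal{P}(X)\to\mathbb{Z}$ with $f(\emptyset)=0$; $\mathrm{Bool}(X)$ is their set; $f_{\mid Y}$ is the restriction to $\mathcal{P}(Y)$. For disjoint $X,Y$, $(f\star_1g)(A)=f(A\cap X)+g(A\cap Y)$ (associative, commutative, unit $1\in\mathrm{Bool}(\emptyset)$). For nonempty $X$, $f$ is indecomposable if $f=f'\star_1f''$ with $f'\in\mathrm{Bool}(X\setminus Y)$, $f''\in\mathrm{Bool}(Y)$ forces $Y\in\{\emptyset,X\}$. Each $f$ determines a unique equivalence $\sim_f^i$ with $f=\prod^{\star_1}_{Y\in X/\sim_f^i}f_{\mid Y}$ and each $f_{\mid Y}$ indecomposable; $\mathrm{ic}(f)=|X/\sim_f^i|$. $f$ is modular if $f(A)=\sum_{x\in A}f(\{x\})$ for all $A$. For an equivalence $\sim$ on $X$: $\mathrm{cl}(\sim)=|X/{\sim}|$, $\varpi_\sim$ the canonical surjection, $f/{\sim}(A)=f(\varpi_\sim^{-1}(A))$,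 $(f\mid\sim)(A)=\sum_{Y\in X/\sim}f(A\cap Y)$. If $\sim\subseteq\sim'$, $\overline{\sim'}$ is the equivalence on $X/{\sim}$ with $\varpi_\sim(x)\,\overline{\sim'}\,\varpi_\sim(y)\iff x\sim'y$. $=_X$ is the equality relation. $\mathcal{E}^W(f)=\{\sim:\mathrm{ic}(f\mid\sim)=\mathrm{cl}(\sim)\}$ and $\mathcal{E}^S(f)=\{\sim\in\mathcal{E}^W(f):\mathrm{ic}(f/{\sim})=\mathrm{ic}(f)\}$. *)

theory Defs
  imports Main "HOL-Library.Nat_Bijection"
begin

(* Quotient sets X/~ are
   represented by encoding each (finite) class C as the natural number
   set_encode C (a bijection between finite subsets of nat and nat). *)

type_synonym bfun = "nat set \<Rightarrow> int"

(* f \<in> Bool(X): f(\<emptyset>)=0; values outside P(X) are fixed to 0 (canonical extension) *)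
definition bool_fun :: "nat set \<Rightarrow> bfun \<Rightarrow> bool" where
  "bool_fun X f \<longleftrightarrow> f {} = 0 \<and> (\<forall>A. \<not> A \<subseteq> X \<longrightarrow> f A = 0)"

definition one_bool :: bfun where
  "one_bool = (\<lambda>A. 0)"

definition restr :: "bfun \<Rightarrow> nat set \<Rightarrow> bfun" where
  "restr f Y = (\<lambda>A. if A \<subseteq> Y then f A else 0)"

definition star1 :: "nat set \<Rightarrow> nat set \<Rightarrow> bfun \<Rightarrow> bfun \<Rightarrow> bfun" where
  "star1 X Y f g = (\<lambda>A. if A \<subseteq> X \<union> Y then f (A \<inter> X) + g (A \<inter> Y) else 0)"

definition transp :: "nat set \<Rightarrow> (nat \<Rightarrow> nat) \<Rightarrow> bfun \<Rightarrow> bfun" where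
  "transp X \<sigma> f = (\<lambda>A. if A \<subseteq> \<sigma> ` X then f {x \<in> X. \<sigma> x \<in> A} else 0)"

definition transp_rel :: "(nat \<Rightarrow> nat) \<Rightarrow> nat rel \<Rightarrow> nat rel" where
  "transp_rel \<sigma> r = map_prod \<sigma> \<sigma> ` r"

definition indecomposable :: "nat set \<Rightarrow> bfun \<Rightarrow> bool" where
  "indecomposable X f \<longleftrightarrow> X \<noteq> {} \<and>
     (\<forall>Y f' f''. Y \<subseteq> X \<and> bool_fun (X - Y) f' \<and> bool_fun Y f'' \<and> f = star1 (X - Y) Y f' f''
        \<longrightarrow> Y = {} \<or> Y = X)"

definition split_fun :: "nat set \<Rightarrow> nat rel \<Rightarrow> bfun \<Rightarrow> bfun" where
  "split_fun X r f = (\<lambda>A. if A \<subseteq> X then (\<Sum>Y\<in>X // r. f (A \<inter> Y)) else 0)"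

definition varpi :: "nat rel \<Rightarrow> nat \<Rightarrow> nat" where
  "varpi r x = set_encode (r `` {x})"

definition quot_set :: "nat set \<Rightarrow> nat rel \<Rightarrow> nat set" where
  "quot_set X r = set_encode ` (X // r)"

definition quot_fun :: "nat set \<Rightarrow> nat rel \<Rightarrow> bfun \<Rightarrow> bfun" where
  "quot_fun X r f = (\<lambda>A. if A \<subseteq> quot_set X r then f {x \<in> X. varpi r x \<in> A} else 0)"

definition quot_rel :: "nat set \<Rightarrow> nat rel \<Rightarrow> nat rel \<Rightarrow> nat rel" where
  "quot_rel X r r' = {(varpi r x, varpi r y) | x y. x \<in> X \<and> y \<in> X \<and> (x, y) \<in> r'}"

definition indec_equiv :: "nat set \<Rightarrow> bfun \<Rightarrow> nat rel \<Rightarrow> bool" where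
  "indec_equiv X f r \<longleftrightarrow> equiv X r \<and> f = split_fun X r f \<and>
     (\<forall>Y \<in> X // r. indecomposable Y (restr f Y))"

(* \<sim>_f^i (unique by the paper) *)
definition sim_i :: "nat set \<Rightarrow> bfun \<Rightarrow> nat rel" where
  "sim_i X f = (THE r. indec_equiv X f r)"

definition ic :: "nat set \<Rightarrow> bfun \<Rightarrow> nat" where
  "ic X f = card (X // sim_i X f)"

definition cl :: "nat set \<Rightarrow> nat rel \<Rightarrow> nat" where
  "cl X r = card (X // r)"

definition modular :: "nat set \<Rightarrow> bfun \<Rightarrow> bool" where
  "modular X f \<longleftrightarrow> (\<forall>A. A \<subseteq> X \<longrightarrow> f A = (\<Sum>x\<in>A. f {x}))"

definition EW :: "nat set \<Rightarrow> bfun \<Rightarrow> nat rel set" where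
  "EW X f = {r. equiv X r \<and> ic X (split_fun X r f) = cl X r}"

definition ES :: "nat set \<Rightarrow> bfun \<Rightarrow> nat rel set" where
  "ES X f = {r \<in> EW X f. ic (quot_set X r) (quot_fun X r f) = ic X f}"

end

theory Submission
  imports Defs
begin

lemma bool_fun_restr: "bool_fun X f \<Longrightarrow> Y \<subseteq> X \<Longrightarrow> bool_fun Y (restr f Y)"
  unfolding bool_fun_def restr_def by auto

lemma restr_restr: "Z \<subseteq> Y \<Longrightarrow> restr (restr f Y) Z = restr f Z"
  unfolding restr_def by (rule ext) auto

lemma restr_self: "bool_fun X f \<Longrightarrow> restr f X = f"
  unfolding bool_fun_def restr_def by (rule ext) auto

lemma bool_fun_star1: "bool_fun X f \<Longrightarrow> bool_fun Y g \<Longrightarrow> bool_fun (X \<union> Y) (star1 X Y f g)"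
  unfolding bool_fun_def star1_def by auto

lemma bool_fun_split: "bool_fun X f \<Longrightarrow> bool_fun X (split_fun X r f)"
  unfolding bool_fun_def split_fun_def by auto

lemma equiv_union:
  assumes "equiv X r1" "equiv Y r2" "X \<inter> Y = {}"
  shows "equiv (X \<union> Y) (r1 \<union> r2)"
proof (rule equivI)
  have t1: "r1 \<subseteq> X \<times> X" "r2 \<subseteq> Y \<times> Y" using assms equiv_type by auto
  then show "r1 \<union> r2 \<subseteq> (X \<union> Y) \<times> (X \<union> Y)" by blast
  show "refl_on (X \<union> Y) (r1 \<union> r2)" using assms(1,2) unfolding equiv_def refl_on_def by blast
  show "sym (r1 \<union> r2)" using assms(1,2) unfolding equiv_def by (simp add: sym_Un)
  show "trans (r1 \<union> r2)"
  proof (rule transI)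
    fix a b c assume ab: "(a, b) \<in> r1 \<union> r2" and bc: "(b, c) \<in> r1 \<union> r2"
    have tr: "trans r1" "trans r2" using assms(1,2) unfolding equiv_def by auto
    show "(a, c) \<in> r1 \<union> r2"
    proof (cases "(a, b) \<in> r1")
      case True
      then have "b \<in> X" using t1 by blast
      then have "(b, c) \<in> r1" using bc t1 assms(3) by blast
      then show ?thesis using True tr(1) unfolding trans_def by blast
    next
      case False
      then have ab2: "(a, b) \<in> r2" using ab by blast
      then have "b \<in> Y" using t1 by blast
      then have "(b, c) \<in> r2" using bc t1 assms(3) by blast
      then show ?thesis using ab2 tr(2) unfolding trans_def by blast
    qed
  qed
qed

lemma quot_union:
  assumes "r1 \<subseteq> X \<times> X" "r2 \<subseteq> Y \<times> Y" "X \<inter> Y = {}"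
  shows "(X \<union> Y) // (r1 \<union> r2) = X // r1 \<union> Y // r2"
proof -
  have a: "x \<in> X \<Longrightarrow> (r1 \<union> r2) `` {x} = r1 `` {x}" for x using assms by blast
  have b: "x \<in> Y \<Longrightarrow> (r1 \<union> r2) `` {x} = r2 `` {x}" for x using assms by blast
  have "(X \<union> Y) // (r1 \<union> r2) = (\<Union>x\<in>X. {(r1 \<union> r2) `` {x}}) \<union> (\<Union>x\<in>Y. {(r1 \<union> r2) `` {x}})"
    unfolding quotient_def by (rule UN_Un)
  also have "\<dots> = (\<Union>x\<in>X. {r1 `` {x}}) \<union> (\<Union>x\<in>Y. {r2 `` {x}})"
    using a b by (metis (no_types, lifting) SUP_cong)
  finally show ?thesis unfolding quotient_def .
qed

lemma quot_subset: "equiv X r \<Longrightarrow> Z \<in> X // r \<Longrightarrow> Z \<subseteq> X"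
  by (metis Union_quotient Union_upper)

lemma quot_nonempty: "equiv X r \<Longrightarrow> Z \<in> X // r \<Longrightarrow> Z \<noteq> {}"
  by (metis empty_iff equiv_class_self quotientE)

lemma quot_disj_sets:
  assumes "equiv X r1" "equiv Y r2" "X \<inter> Y = {}"
  shows "X // r1 \<inter> Y // r2 = {}"
proof (rule ccontr)
  assume "X // r1 \<inter> Y // r2 \<noteq> {}"
  then obtain Z where z: "Z \<in> X // r1" "Z \<in> Y // r2" by blast
  have "Z \<subseteq> X" "Z \<subseteq> Y" "Z \<noteq> {}"
    using quot_subset[OF assms(1) z(1)] quot_subset[OF assms(2) z(2)] quot_nonempty[OF assms(1) z(1)] by auto
  then show False using assms(3) by blast
qed

lemma quot_full: "X \<noteq> {} \<Longrightarrow> X // (X \<times> X) = {X}"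
  unfolding quotient_def by auto

lemma equiv_full: "equiv X (X \<times> X)"
  unfolding equiv_def refl_on_def sym_def trans_def by auto

lemma split_sum: "f = split_fun X s f \<Longrightarrow> A \<subseteq> X \<Longrightarrow> f A = (\<Sum>Z\<in>X//s. f (A \<inter> Z))"
  by (metis split_fun_def)

lemma star_indec:
  assumes XY: "X \<inter> Y = {}" and fX: "bool_fun X f" and gY: "bool_fun Y g"
    and i1: "indec_equiv X f r1" and i2: "indec_equiv Y g r2" and fin: "finite X" "finite Y"
  shows "indec_equiv (X \<union> Y) (star1 X Y f g) (r1 \<union> r2)"
proof -
  let ?h = "star1 X Y f g"
  have e1: "equiv X r1" and e2: "equiv Y r2" using i1 i2 unfolding indec_equiv_def by auto
  have q: "(X \<union> Y) // (r1 \<union> r2) = X // r1 \<union> Y // r2"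
    using quot_union[OF equiv_type[OF e1] equiv_type[OF e2] XY] .
  have d: "X // r1 \<inter> Y // r2 = {}" using quot_disj_sets[OF e1 e2 XY] .
  have fq: "finite (X // r1)" "finite (Y // r2)"
    using fin e1 e2 finite_quotient equiv_type by blast+
  have f0: "f {} = 0" "g {} = 0" using fX gY unfolding bool_fun_def by auto
  have rX: "restr ?h Z = restr f Z" if "Z \<subseteq> X" for Z
  proof (rule ext)
    fix A show "restr ?h Z A = restr f Z A"
    proof (cases "A \<subseteq> Z")
      case True
      then have "A \<inter> Y = {}" "A \<inter> X = A" using that XY by auto
      then show ?thesis using True f0 that unfolding restr_def star1_def by auto
    qed (simp add: restr_def)
  qed
  have rY: "restr ?h Z = restr g Z" if "Z \<subseteq> Y" for Z
  proof (rule ext)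
    fix A show "restr ?h Z A = restr g Z A"
    proof (cases "A \<subseteq> Z")
      case True
      then have "A \<inter> X = {}" "A \<inter> Y = A" using that XY by auto
      then show ?thesis using True f0 that unfolding restr_def star1_def by auto
    qed (simp add: restr_def)
  qed
  have sp: "?h = split_fun (X \<union> Y) (r1 \<union> r2) ?h"
  proof (rule ext)
    fix A
    show "?h A = split_fun (X \<union> Y) (r1 \<union> r2) ?h A"
    proof (cases "A \<subseteq> X \<union> Y")
      case True
      have s1: "f (A \<inter> X) = (\<Sum>Z\<in>X//r1. ?h (A \<inter> Z))"
      proof -
        have "f (A \<inter> X) = (\<Sum>Z\<in>X//r1. f (A \<inter> X \<inter> Z))"
          using split_sum[of f X r1 "A \<inter> X"] i1 unfolding indec_equiv_def by auto
        also have "\<dots> = (\<Sum>Z\<in>X//r1. ?h (A \<inter> Z))"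
        proof (rule sum.cong)
          fix Z assume "Z \<in> X // r1"
          then have "Z \<subseteq> X" using quot_subset e1 by blast
          moreover have "A \<inter> X \<inter> Z = A \<inter> Z" using \<open>Z \<subseteq> X\<close> by blast
          ultimately have "?h (A \<inter> Z) = restr ?h Z (A \<inter> Z)" "f (A \<inter> X \<inter> Z) = restr f Z (A \<inter> Z)"
            unfolding restr_def by auto
          then show "f (A \<inter> X \<inter> Z) = ?h (A \<inter> Z)" using rX[OF \<open>Z \<subseteq> X\<close>] by simp
        qed simp
        finally show ?thesis .
      qed
      have s2: "g (A \<inter> Y) = (\<Sum>Z\<in>Y//r2. ?h (A \<inter> Z))"
      proof -
        have "g (A \<inter> Y) = (\<Sum>Z\<in>Y//r2. g (A \<inter> Y \<inter> Z))"
          using split_sum[of g Y r2 "A \<inter> Y"] i2 unfolding indec_equiv_def by auto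
        also have "\<dots> = (\<Sum>Z\<in>Y//r2. ?h (A \<inter> Z))"
        proof (rule sum.cong)
          fix Z assume "Z \<in> Y // r2"
          then have "Z \<subseteq> Y" using quot_subset e2 by blast
          moreover have "A \<inter> Y \<inter> Z = A \<inter> Z" using \<open>Z \<subseteq> Y\<close> by blast
          ultimately have "?h (A \<inter> Z) = restr ?h Z (A \<inter> Z)" "g (A \<inter> Y \<inter> Z) = restr g Z (A \<inter> Z)"
            unfolding restr_def by auto
          then show "g (A \<inter> Y \<inter> Z) = ?h (A \<inter> Z)" using rY[OF \<open>Z \<subseteq> Y\<close>] by simp
        qed simp
        finally show ?thesis .
      qed
      have "?h A = f (A \<inter> X) + g (A \<inter> Y)" using True unfolding star1_def by simp
      also have "\<dots> = (\<Sum>Z\<in>X//r1 \<union> Y//r2. ?h (A \<inter> Z))"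
        unfolding s1 s2 by (rule sum.union_disjoint[OF fq d, symmetric])
      finally show ?thesis using True q unfolding split_fun_def by simp
    next
      case False
      then show ?thesis unfolding split_fun_def star1_def by simp
    qed
  qed
  have ind: "\<forall>Z\<in>(X \<union> Y)//(r1 \<union> r2). indecomposable Z (restr ?h Z)"
  proof
    fix Z assume "Z \<in> (X \<union> Y)//(r1 \<union> r2)"
    then consider "Z \<in> X // r1" | "Z \<in> Y // r2" using q by blast
    then show "indecomposable Z (restr ?h Z)"
    proof cases
      case 1 then show ?thesis using rX[OF quot_subset[OF e1 1]] i1 unfolding indec_equiv_def by auto
    next
      case 2 then show ?thesis using rY[OF quot_subset[OF e2 2]] i2 unfolding indec_equiv_def by auto
    qed
  qed
  show ?thesis unfolding indec_equiv_def using equiv_union[OF e1 e2 XY] sp ind by blast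
qed

lemma indec_exists:
  "finite X \<Longrightarrow> bool_fun X f \<Longrightarrow> \<exists>r. indec_equiv X f r"
proof (induction "card X" arbitrary: X f rule: less_induct)
  case less
  show ?case
  proof (cases "X = {}")
    case True
    have f0: "f = (\<lambda>A. 0)"
    proof (rule ext)
      fix A show "f A = 0" using less.prems True unfolding bool_fun_def by (cases "A = {}") auto
    qed
    have "indec_equiv X f {}"
      unfolding indec_equiv_def True split_fun_def equiv_def refl_on_def sym_def trans_def
      using f0 by auto
    then show ?thesis by blast
  next
    case ne: False
    show ?thesis
    proof (cases "indecomposable X f")
      case True
      have "indec_equiv X f (X \<times> X)"
        unfolding indec_equiv_def
      proof (intro conjI)
        show "equiv X (X \<times> X)" by (rule equiv_full)
        show "f = split_fun X (X \<times> X) f"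
          unfolding split_fun_def quot_full[OF ne] using less.prems(2) unfolding bool_fun_def
          by (intro ext) (auto simp: Int_absorb2)
        show "\<forall>Y\<in>X // (X \<times> X). indecomposable Y (restr f Y)"
          using True restr_self[OF less.prems(2)] quot_full[OF ne] by simp
      qed
      then show ?thesis by blast
    next
      case False
      then obtain Y f' f'' where Y: "Y \<subseteq> X" "bool_fun (X - Y) f'" "bool_fun Y f''"
        "f = star1 (X - Y) Y f' f''" "Y \<noteq> {}" "Y \<noteq> X"
        using ne unfolding indecomposable_def by blast
      have c1: "card (X - Y) < card X" using Y less.prems(1) by (intro psubset_card_mono) auto
      have c2: "card Y < card X" using Y less.prems(1) by (intro psubset_card_mono) auto
      obtain r1 where r1: "indec_equiv (X - Y) f' r1" using less.hyps[OF c1] Y less.prems by blast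
      obtain r2 where r2: "indec_equiv Y f'' r2" using less.hyps[OF c2] Y less.prems
        by (meson finite_subset)
      have "indec_equiv ((X - Y) \<union> Y) (star1 (X - Y) Y f' f'') (r1 \<union> r2)"
        by (rule star_indec) (use Y r1 r2 less.prems in \<open>auto intro: finite_subset\<close>)
      moreover have "(X - Y) \<union> Y = X" using Y by blast
      ultimately show ?thesis using Y(4) by metis
    qed
  qed
qed

lemma indec_block:
  assumes fX: "bool_fun X f" and sp: "f = split_fun X s f" and e: "equiv X s" and fin: "finite X"
    and YX: "Y \<subseteq> X" and ind: "indecomposable Y (restr f Y)"
  shows "\<exists>Z\<in>X//s. Y \<subseteq> Z"
proof (rule ccontr)
  assume nz: "\<not> (\<exists>Z\<in>X//s. Y \<subseteq> Z)"
  have "Y \<noteq> {}" using ind unfolding indecomposable_def by blast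
  then obtain y where y: "y \<in> Y" by blast
  define Z0 where "Z0 = s `` {y}"
  have Z0q: "Z0 \<in> X // s" unfolding Z0_def using y YX by (auto intro: quotientI)
  define W where "W = Y \<inter> Z0"
  have yW: "y \<in> W" unfolding W_def Z0_def using y YX e equiv_class_self by fastforce
  have WY: "W \<noteq> Y" using nz Z0q unfolding W_def by blast
  have f0: "f {} = 0" using fX unfolding bool_fun_def by auto
  have fq: "finite (X // s)" using fin e finite_quotient equiv_type by blast
  have disj: "Z \<in> X // s \<Longrightarrow> Z \<noteq> Z0 \<Longrightarrow> Z \<inter> Z0 = {}" for Z
    using quotient_disj[OF e _ Z0q] by blast
  have key: "f B = f (B \<inter> Z0) + (\<Sum>Z\<in>X//s - {Z0}. f (B \<inter> Z))" if "B \<subseteq> X" for B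
    using split_sum[OF sp that] sum.remove[OF fq Z0q] by simp
  have dec: "restr f Y = star1 (Y - W) W (restr f (Y - W)) (restr f W)"
  proof (rule ext)
    fix A show "restr f Y A = star1 (Y - W) W (restr f (Y - W)) (restr f W) A"
    proof (cases "A \<subseteq> Y")
      case True
      have AX: "A \<subseteq> X" using True YX by blast
      have u: "(Y - W) \<union> W = Y" using W_def by blast
      have i1: "A \<inter> (Y - W) \<inter> Z0 = {}" unfolding W_def using True by blast
      have i2: "A \<inter> (Y - W) \<inter> Z = A \<inter> Z" if "Z \<in> X // s - {Z0}" for Z
        using disj[of Z] that True unfolding W_def by blast
      have i3: "A \<inter> W \<inter> Z0 = A \<inter> Z0" unfolding W_def using True by blast
      have i4: "A \<inter> W \<inter> Z = {}" if "Z \<in> X // s - {Z0}" for Z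
        using disj[of Z] that unfolding W_def by blast
      have e1: "f (A \<inter> (Y - W)) = (\<Sum>Z\<in>X//s - {Z0}. f (A \<inter> Z))"
        using key[of "A \<inter> (Y - W)"] AX i1 i2 f0 by (auto intro: sum.cong)
      have e2: "f (A \<inter> W) = f (A \<inter> Z0)"
        using key[of "A \<inter> W"] AX i3 i4 f0 by auto
      have "restr f Y A = f A" using True unfolding restr_def by simp
      also have "\<dots> = f (A \<inter> (Y - W)) + f (A \<inter> W)" using key[OF AX] e1 e2 by simp
      finally show ?thesis using True u unfolding star1_def restr_def by auto
    next
      case False
      have "(Y - W) \<union> W = Y" using W_def by blast
      then show ?thesis using False unfolding star1_def restr_def by auto
    qed
  qed
  have "W \<subseteq> Y" unfolding W_def by blast
  moreover have "bool_fun (Y - W) (restr f (Y - W))" "bool_fun W (restr f W)"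
    using f0 unfolding bool_fun_def restr_def by auto
  moreover have "Y - (Y - W) = W" unfolding W_def by blast
  ultimately have "W = {} \<or> W = Y"
    using ind[unfolded indecomposable_def, THEN conjunct2, rule_format, of W "restr f (Y - W)" "restr f W"] dec
    by blast
  then show False using yW WY by blast
qed

lemma indec_unique_sub:
  assumes fX: "bool_fun X f" and fin: "finite X"
    and i1: "indec_equiv X f r1" and i2: "indec_equiv X f r2"
  shows "r1 \<subseteq> r2"
proof
  fix p assume p: "p \<in> r1"
  obtain x y where xy: "p = (x, y)" by (cases p)
  have e1: "equiv X r1" and e2: "equiv X r2" using i1 i2 unfolding indec_equiv_def by auto
  have xX: "x \<in> X" using p xy e1 equiv_type by blast
  define Y where "Y = r1 `` {x}"
  have Yq: "Y \<in> X // r1" unfolding Y_def using xX by (rule quotientI)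
  have "Y \<subseteq> X" using quot_subset[OF e1 Yq] .
  moreover have "indecomposable Y (restr f Y)" using i1 Yq unfolding indec_equiv_def by auto
  ultimately obtain Z where Z: "Z \<in> X // r2" "Y \<subseteq> Z"
    using indec_block[OF fX _ e2 fin] i2 unfolding indec_equiv_def by blast
  have "x \<in> Y" "y \<in> Y" unfolding Y_def using p xy e1 xX equiv_class_self by fastforce+
  then have "x \<in> Z" "y \<in> Z" using Z by auto
  obtain z where z: "Z = r2 `` {z}" "z \<in> X" using Z(1) by (rule quotientE)
  have "(z, x) \<in> r2" "(z, y) \<in> r2" using \<open>x \<in> Z\<close> \<open>y \<in> Z\<close> z by auto
  then show "p \<in> r2" using e2 xy unfolding equiv_def sym_def trans_def by blast
qed

lemma sim_i_prop: "finite X \<Longrightarrow> bool_fun X f \<Longrightarrow> indec_equiv X f (sim_i X f)"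
  unfolding sim_i_def
  by (rule theI') (metis indec_exists indec_unique_sub subset_antisym)

lemma sim_i_eq: "finite X \<Longrightarrow> bool_fun X f \<Longrightarrow> indec_equiv X f r \<Longrightarrow> sim_i X f = r"
  by (metis sim_i_prop indec_unique_sub subset_antisym)

lemma sim_i_equiv: "finite X \<Longrightarrow> bool_fun X f \<Longrightarrow> equiv X (sim_i X f)"
  using sim_i_prop indec_equiv_def by blast

lemma ic_star:
  assumes "X \<inter> Y = {}" "bool_fun X f" "bool_fun Y g" "finite X" "finite Y"
  shows "ic (X \<union> Y) (star1 X Y f g) = ic X f + ic Y g"
proof -
  let ?s1 = "sim_i X f" and ?s2 = "sim_i Y g"
  have i1: "indec_equiv X f ?s1" and i2: "indec_equiv Y g ?s2" using sim_i_prop assms by auto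
  have e1: "equiv X ?s1" and e2: "equiv Y ?s2" using i1 i2 unfolding indec_equiv_def by auto
  have "sim_i (X \<union> Y) (star1 X Y f g) = ?s1 \<union> ?s2"
    by (rule sim_i_eq) (use assms star_indec[OF assms(1-3) i1 i2] bool_fun_star1 in auto)
  moreover have "(X \<union> Y) // (?s1 \<union> ?s2) = X // ?s1 \<union> Y // ?s2"
    using quot_union[OF equiv_type[OF e1] equiv_type[OF e2] assms(1)] .
  moreover have "finite (X // ?s1)" "finite (Y // ?s2)"
    using assms e1 e2 finite_quotient equiv_type by blast+
  ultimately show ?thesis unfolding ic_def
    using card_Un_disjoint quot_disj_sets[OF e1 e2 assms(1)] by metis
qed

lemma remove_block:
  assumes e: "equiv X r" and Yq: "Y \<in> X // r"
  shows "equiv (X - Y) (r \<inter> ((X - Y) \<times> (X - Y)))"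
    and "(X - Y) // (r \<inter> ((X - Y) \<times> (X - Y))) = X // r - {Y}"
    and "r = (r \<inter> ((X - Y) \<times> (X - Y))) \<union> Y \<times> Y"
proof -
  let ?X = "X - Y" and ?r = "r \<inter> ((X - Y) \<times> (X - Y))"
  obtain y where y: "Y = r `` {y}" "y \<in> X" using Yq by (rule quotientE)
  have rs: "r \<subseteq> X \<times> X" using e equiv_type by blast
  have sy: "sym r" and tr: "trans r" and rf: "refl_on X r" using e unfolding equiv_def by auto
  have cl: "r `` {x} \<subseteq> ?X" if "x \<in> ?X" for x
  proof
    fix z assume z: "z \<in> r `` {x}"
    have "z \<notin> Y"
    proof
      assume "z \<in> Y"
      then have "(y, z) \<in> r" using y by auto
      moreover have "(z, x) \<in> r" using z sy unfolding sym_def by auto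
      ultimately have "(y, x) \<in> r" using tr unfolding trans_def by blast
      then show False using that y by auto
    qed
    then show "z \<in> ?X" using z rs by auto
  qed
  have img: "?r `` {x} = r `` {x}" if "x \<in> ?X" for x using cl[OF that] that by auto
  show "equiv ?X ?r"
  proof (rule equivI)
    show "?r \<subseteq> ?X \<times> ?X" by blast
    show "refl_on ?X ?r" using rf unfolding refl_on_def by blast
    show "sym ?r" using sy unfolding sym_def by blast
    show "trans ?r" using tr unfolding trans_def by blast
  qed
  have inY: "r `` {x} = Y" if "x \<in> Y" for x
    using that y e by (metis Image_singleton_iff equiv_class_eq_iff)
  have notY: "r `` {x} \<noteq> Y" if "x \<in> ?X" for x
    using that e equiv_class_self[OF e, of x] by auto
  show "?X // ?r = X // r - {Y}"
  proof
    show "?X // ?r \<subseteq> X // r - {Y}"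
      using img notY unfolding quotient_def by auto
    show "X // r - {Y} \<subseteq> ?X // ?r"
    proof
      fix Z assume Z: "Z \<in> X // r - {Y}"
      then obtain x where x: "Z = r `` {x}" "x \<in> X" by (auto elim: quotientE)
      have "x \<notin> Y" using inY x Z by auto
      then show "Z \<in> ?X // ?r" using x img quotientI by (metis Diff_iff)
    qed
  qed
  show "r = ?r \<union> Y \<times> Y"
  proof
    show "r \<subseteq> ?r \<union> Y \<times> Y"
    proof
      fix p assume p: "p \<in> r"
      obtain a b where ab: "p = (a, b)" by (cases p)
      show "p \<in> ?r \<union> Y \<times> Y"
      proof (cases "a \<in> Y")
        case True
        then have "b \<in> Y" using inY p ab by auto
        then show ?thesis using True ab by auto
      next
        case False
        have "(b, a) \<in> r" using p ab sy unfolding sym_def by auto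
        then have "b \<notin> Y" using inY False by auto
        then show ?thesis using False p ab rs by auto
      qed
    qed
    show "?r \<union> Y \<times> Y \<subseteq> r"
    proof -
      have "Y \<times> Y \<subseteq> r"
      proof
        fix p assume "p \<in> Y \<times> Y"
        then obtain a b where "p = (a, b)" "(y, a) \<in> r" "(y, b) \<in> r" using y by auto
        then show "p \<in> r" using sy tr unfolding sym_def trans_def by blast
      qed
      then show ?thesis by blast
    qed
  qed
qed

lemma split_decomp:
  assumes fX: "bool_fun X f" and e: "equiv X r" and Yq: "Y \<in> X // r" and fin: "finite X"
  shows "split_fun X r f = star1 (X - Y) Y (split_fun (X - Y) (r \<inter> ((X - Y) \<times> (X - Y))) (restr f (X - Y))) (restr f Y)"
proof (rule ext)
  fix A
  let ?r = "r \<inter> ((X - Y) \<times> (X - Y))"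
  have YX: "Y \<subseteq> X" using quot_subset[OF e Yq] .
  have u: "(X - Y) \<union> Y = X" using YX by blast
  have fq: "finite (X // r)" using fin e finite_quotient equiv_type by blast
  show "split_fun X r f A = star1 (X - Y) Y (split_fun (X - Y) ?r (restr f (X - Y))) (restr f Y) A"
  proof (cases "A \<subseteq> X")
    case True
    have q: "(X - Y) // ?r = X // r - {Y}" using remove_block(2)[OF e Yq] .
    have "split_fun (X - Y) ?r (restr f (X - Y)) (A \<inter> (X - Y)) = (\<Sum>Z\<in>X // r - {Y}. f (A \<inter> Z))"
      unfolding split_fun_def q
    proof (simp, rule sum.cong)
      fix Z assume Z: "Z \<in> X // r - {Y}"
      then have "Z \<subseteq> X - Y" using q quot_subset[OF remove_block(1)[OF e Yq]] by blast
      then have "A \<inter> (X - Y) \<inter> Z = A \<inter> Z" by blast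
      then show "restr f (X - Y) (A \<inter> (X - Y) \<inter> Z) = f (A \<inter> Z)"
        unfolding restr_def using \<open>Z \<subseteq> X - Y\<close> by auto
    qed simp
    moreover have "restr f Y (A \<inter> Y) = f (A \<inter> Y)" unfolding restr_def by simp
    moreover have "split_fun X r f A = f (A \<inter> Y) + (\<Sum>Z\<in>X // r - {Y}. f (A \<inter> Z))"
      using True sum.remove[OF fq Yq] unfolding split_fun_def by simp
    ultimately show ?thesis using True u unfolding star1_def by (simp add: add.commute)
  next
    case False
    then show ?thesis using u unfolding split_fun_def star1_def by simp
  qed
qed

lemma ic_split:
  "finite X \<Longrightarrow> equiv X r \<Longrightarrow> bool_fun X f \<Longrightarrow>
     ic X (split_fun X r f) = (\<Sum>Y\<in>X//r. ic Y (restr f Y))"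
proof (induction "card X" arbitrary: X r f rule: less_induct)
  case less
  show ?case
  proof (cases "X = {}")
    case True
    then show ?thesis unfolding ic_def by simp
  next
    case False
    then have "X // r \<noteq> {}" by simp
    then obtain Y where Yq: "Y \<in> X // r" by (meson equals0I)
    let ?X = "X - Y" and ?r = "r \<inter> ((X - Y) \<times> (X - Y))"
    have YX: "Y \<subseteq> X" using quot_subset[OF less.prems(2) Yq] .
    have Yne: "Y \<noteq> {}" using quot_nonempty[OF less.prems(2) Yq] .
    have c: "card ?X < card X" using YX Yne less.prems(1) by (intro psubset_card_mono) auto
    have e': "equiv ?X ?r" using remove_block(1)[OF less.prems(2) Yq] .
    have q: "?X // ?r = X // r - {Y}" using remove_block(2)[OF less.prems(2) Yq] .
    have bf': "bool_fun ?X (restr f ?X)" using bool_fun_restr[OF less.prems(3) Diff_subset] .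
    have IH: "ic ?X (split_fun ?X ?r (restr f ?X)) = (\<Sum>Z\<in>X//r - {Y}. ic Z (restr f Z))"
    proof -
      have "ic ?X (split_fun ?X ?r (restr f ?X)) = (\<Sum>Z\<in>?X//?r. ic Z (restr (restr f ?X) Z))"
        using less.hyps[OF c _ e' bf'] less.prems(1) by simp
      also have "\<dots> = (\<Sum>Z\<in>X//r - {Y}. ic Z (restr f Z))"
      proof (rule sum.cong)
        show "?X // ?r = X // r - {Y}" by (rule q)
      next
        fix Z assume "Z \<in> X // r - {Y}"
        then have "Z \<subseteq> ?X" using quot_subset[OF e'] q by blast
        then show "ic Z (restr (restr f ?X) Z) = ic Z (restr f Z)" by (simp add: restr_restr)
      qed
      finally show ?thesis .
    qed
    have u: "?X \<union> Y = X" using YX by blast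
    have fq: "finite (X // r)" using finite_quotient[OF less.prems(1) equiv_type[OF less.prems(2)]] .
    have "ic X (split_fun X r f) = ic (?X \<union> Y) (star1 ?X Y (split_fun ?X ?r (restr f ?X)) (restr f Y))"
      using split_decomp[OF less.prems(3,2) Yq less.prems(1)] u by simp
    also have "\<dots> = ic ?X (split_fun ?X ?r (restr f ?X)) + ic Y (restr f Y)"
    proof (rule ic_star)
      show "?X \<inter> Y = {}" by blast
      show "bool_fun ?X (split_fun ?X ?r (restr f ?X))" using bool_fun_split[OF bf'] .
      show "bool_fun Y (restr f Y)" using bool_fun_restr[OF less.prems(3) YX] .
      show "finite ?X" using less.prems(1) by blast
      show "finite Y" using finite_subset[OF YX less.prems(1)] .
    qed
    also have "\<dots> = (\<Sum>Y\<in>X//r. ic Y (restr f Y))"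
      unfolding IH sum.remove[OF fq Yq, of "\<lambda>Y. ic Y (restr f Y)"] by (simp add: add.commute)
    finally show ?thesis .
  qed
qed

lemma quot_set_img: "quot_set A p = varpi p ` A"
  unfolding quot_set_def varpi_def quotient_def by auto

lemma G0:
  assumes e: "equiv X s" and hs: "\<And>x y. x \<in> X \<Longrightarrow> y \<in> X \<Longrightarrow> h x = h y \<longleftrightarrow> (x, y) \<in> s"
  shows "X // s = (\<lambda>a. {x \<in> X. h x = a}) ` (h ` X)"
    and "inj_on (\<lambda>a. {x \<in> X. h x = a}) (h ` X)"
proof -
  have rs: "s \<subseteq> X \<times> X" using e equiv_type by blast
  have cl: "s `` {x} = {y \<in> X. h y = h x}" if x: "x \<in> X" for x
  proof (rule set_eqI)
    fix y show "y \<in> s `` {x} \<longleftrightarrow> y \<in> {y \<in> X. h y = h x}"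
    proof (cases "y \<in> X")
      case True then show ?thesis using hs[OF x True] by auto
    next
      case False then show ?thesis using rs by auto
    qed
  qed
  have "X // s = (\<lambda>x. s `` {x}) ` X" unfolding quotient_def by auto
  also have "\<dots> = (\<lambda>x. {y \<in> X. h y = h x}) ` X" using cl by (intro image_cong) auto
  also have "\<dots> = (\<lambda>a. {x \<in> X. h x = a}) ` (h ` X)" by (simp add: image_image)
  finally show "X // s = (\<lambda>a. {x \<in> X. h x = a}) ` (h ` X)" .
  show "inj_on (\<lambda>a. {x \<in> X. h x = a}) (h ` X)"
    by (rule inj_onI) blast
qed

lemma G:
  assumes sp: "f = split_fun X s f" and e: "equiv X s" and fin: "finite X" and f0: "f {} = 0"
    and hs: "\<And>x y. x \<in> X \<Longrightarrow> y \<in> X \<Longrightarrow> h x = h y \<longleftrightarrow> (x, y) \<in> s"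
    and A: "A \<subseteq> h ` X"
  shows "f {x \<in> X. h x \<in> A} = (\<Sum>a\<in>A. f {x \<in> X. h x = a})"
proof -
  let ?P = "\<lambda>a. {x \<in> X. h x = a}"
  let ?B = "{x \<in> X. h x \<in> A}"
  have "f ?B = (\<Sum>Z\<in>X//s. f (?B \<inter> Z))" using split_sum[OF sp, of ?B] by blast
  also have "\<dots> = (\<Sum>a\<in>h ` X. f (?B \<inter> ?P a))"
  proof -
    have eq: "X // s = ?P ` (h ` X)" by (rule G0(1)[OF e hs])
    show ?thesis unfolding eq using sum.reindex[OF G0(2)[OF e hs], of "\<lambda>Z. f (?B \<inter> Z)"] by (simp add: comp_def)
  qed
  also have "\<dots> = (\<Sum>a\<in>h ` X. if a \<in> A then f (?P a) else 0)"
  proof (rule sum.cong)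
    fix a assume "a \<in> h ` X"
    show "f (?B \<inter> ?P a) = (if a \<in> A then f (?P a) else 0)"
    proof (cases "a \<in> A")
      case True
      then have "?B \<inter> ?P a = ?P a" by blast
      then show ?thesis using True by simp
    next
      case False
      then have "?B \<inter> ?P a = {}" by blast
      then show ?thesis using False f0 by simp
    qed
  qed simp
  also have "\<dots> = (\<Sum>a\<in>h ` X \<inter> A. f (?P a))"
    using sum.inter_restrict[of "h ` X" "\<lambda>a. f (?P a)" A] fin by simp
  also have "h ` X \<inter> A = A" using A by blast
  finally show ?thesis .
qed

lemma varpi_eq:
  assumes "equiv X r" "finite X" "x \<in> X" "y \<in> X"
  shows "varpi r x = varpi r y \<longleftrightarrow> (x, y) \<in> r"
proof -
  have "r `` {x} \<subseteq> X" "r `` {y} \<subseteq> X" using assms(1) equiv_type by blast+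
  then have "finite (r `` {x})" "finite (r `` {y})" using assms(2) finite_subset by blast+
  then show ?thesis unfolding varpi_def using set_encode_eq eq_equiv_class_iff[OF assms(1,3,4)] by metis
qed

lemma quot_quot:
  assumes fin: "finite X" and bf: "bool_fun X f" and e: "equiv X r"
    and i: "indec_equiv X f s" and rs: "r \<subseteq> s"
  shows "modular (quot_set (quot_set X r) (quot_rel X r s))
                 (quot_fun (quot_set X r) (quot_rel X r s) (quot_fun X r f))"
    and "card (quot_set X r // quot_rel X r s) = card (X // s)"
proof -
  let ?Q = "quot_set X r" and ?q = "quot_rel X r s" and ?g = "quot_fun X r f"
  define h where "h x = varpi ?q (varpi r x)" for x
  have es: "equiv X s" and sp: "f = split_fun X s f" using i unfolding indec_equiv_def by auto
  have ss: "s \<subseteq> X \<times> X" using es equiv_type by blast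
  have f0: "f {} = 0" using bf unfolding bool_fun_def by auto
  have Q: "?Q = varpi r ` X" by (rule quot_set_img)
  have finQ: "finite ?Q" using Q fin by simp
  have F2: "x \<in> X \<Longrightarrow> y \<in> X \<Longrightarrow> varpi r x = varpi r y \<longleftrightarrow> (x, y) \<in> r" for x y
    using varpi_eq[OF e fin] by blast
  have F3: "?q `` {varpi r x} = varpi r ` (s `` {x})" if x: "x \<in> X" for x
  proof
    show "?q `` {varpi r x} \<subseteq> varpi r ` (s `` {x})"
    proof
      fix c assume "c \<in> ?q `` {varpi r x}"
      then have "(varpi r x, c) \<in> ?q" by blast
      then obtain a b where ab: "varpi r x = varpi r a" "c = varpi r b" "a \<in> X" "b \<in> X" "(a, b) \<in> s"
        unfolding quot_rel_def by auto
      have "(x, a) \<in> s" using F2[OF x ab(3)] ab(1) rs by blast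
      then have "(x, b) \<in> s" using ab(5) es unfolding equiv_def trans_def by blast
      then show "c \<in> varpi r ` (s `` {x})" using ab(2) by blast
    qed
    show "varpi r ` (s `` {x}) \<subseteq> ?q `` {varpi r x}"
    proof
      fix c assume "c \<in> varpi r ` (s `` {x})"
      then obtain b where b: "(x, b) \<in> s" "c = varpi r b" by blast
      then have "b \<in> X" using ss by blast
      then show "c \<in> ?q `` {varpi r x}" unfolding quot_rel_def using b x by blast
    qed
  qed
  have fin_cl: "finite (s `` {x})" for x
  proof -
    have "s `` {x} \<subseteq> X" using ss by blast
    then show ?thesis using fin finite_subset by blast
  qed
  have F4: "h x = h y \<longleftrightarrow> (x, y) \<in> s" if x: "x \<in> X" and y: "y \<in> X" for x y
  proof -
    have "h x = h y \<longleftrightarrow> varpi r ` (s `` {x}) = varpi r ` (s `` {y})"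
      unfolding h_def varpi_def[of ?q] F3[OF x] F3[OF y] using fin_cl set_encode_eq by auto
    also have "\<dots> \<longleftrightarrow> (x, y) \<in> s"
    proof
      assume eq: "varpi r ` (s `` {x}) = varpi r ` (s `` {y})"
      have "(y, y) \<in> s" using y es unfolding equiv_def refl_on_def by blast
      then have "varpi r y \<in> varpi r ` (s `` {x})" using eq by blast
      then obtain b where b: "(x, b) \<in> s" "varpi r b = varpi r y" by (auto simp: Image_singleton)
      then have "b \<in> X" using ss by blast
      then have "(b, y) \<in> s" using F2[OF _ y] b rs by blast
      then show "(x, y) \<in> s" using b es unfolding equiv_def trans_def by blast
    next
      assume "(x, y) \<in> s"
      then have "s `` {x} = s `` {y}" using es x y eq_equiv_class_iff by metis
      then show "varpi r ` (s `` {x}) = varpi r ` (s `` {y})" by simp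
    qed
    finally show ?thesis .
  qed
  have QQ: "quot_set ?Q ?q = h ` X" unfolding quot_set_img Q h_def by (simp add: image_image)
  have F6: "quot_fun ?Q ?q ?g A = f {x \<in> X. h x \<in> A}" if A: "A \<subseteq> quot_set ?Q ?q" for A
  proof -
    have "quot_fun ?Q ?q ?g A = ?g {b \<in> ?Q. varpi ?q b \<in> A}" using A unfolding quot_fun_def by simp
    also have "\<dots> = f {x \<in> X. varpi r x \<in> {b \<in> ?Q. varpi ?q b \<in> A}}" unfolding quot_fun_def by simp
    also have "{x \<in> X. varpi r x \<in> {b \<in> ?Q. varpi ?q b \<in> A}} = {x \<in> X. h x \<in> A}"
      unfolding h_def Q by auto
    finally show ?thesis .
  qed
  show "modular (quot_set ?Q ?q) (quot_fun ?Q ?q ?g)"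
    unfolding modular_def
  proof (intro allI impI)
    fix A assume A: "A \<subseteq> quot_set ?Q ?q"
    have "quot_fun ?Q ?q ?g A = (\<Sum>a\<in>A. f {x \<in> X. h x = a})"
      unfolding F6[OF A] by (rule G[OF sp es fin f0 F4]) (use A QQ in auto)
    also have "\<dots> = (\<Sum>a\<in>A. quot_fun ?Q ?q ?g {a})"
    proof (rule sum.cong)
      fix a assume "a \<in> A"
      then have "{a} \<subseteq> quot_set ?Q ?q" using A by blast
      then show "f {x \<in> X. h x = a} = quot_fun ?Q ?q ?g {a}" using F6 by simp
    qed simp
    finally show "quot_fun ?Q ?q ?g A = (\<Sum>x\<in>A. quot_fun ?Q ?q ?g {x})" .
  qed
  have qsub: "?q \<subseteq> ?Q \<times> ?Q" unfolding quot_rel_def Q by blast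
  have "inj_on set_encode (?Q // ?q)"
  proof (rule inj_on_subset[OF inj_on_set_encode])
    show "?Q // ?q \<subseteq> Collect finite"
      using finQ qsub by (auto elim!: quotientE intro: finite_subset)
  qed
  then have "card (?Q // ?q) = card (quot_set ?Q ?q)" unfolding quot_set_def by (simp add: card_image)
  also have "\<dots> = card (h ` X)" using QQ by simp
  also have "\<dots> = card (X // s)"
  proof -
    have eq: "X // s = (\<lambda>a. {x \<in> X. h x = a}) ` (h ` X)" by (rule G0(1)[OF es F4])
    show ?thesis unfolding eq using card_image[OF G0(2)[OF es F4]] by simp
  qed
  finally show "card (?Q // ?q) = card (X // s)" .
qed

lemma P3:
  fixes Bt :: "nat set \<Rightarrow> bfun \<Rightarrow> bool"
    and E :: "nat set \<Rightarrow> bfun \<Rightarrow> nat rel set"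
  assumes Bt_restr: "\<And>X Y f. finite X \<Longrightarrow> Y \<subseteq> X \<Longrightarrow> Bt X f \<Longrightarrow> Bt Y (restr f Y)"
    and Delta: "\<And>X Y f rX rY. finite X \<Longrightarrow> finite Y \<Longrightarrow> X \<inter> Y = {} \<Longrightarrow> Bt (X \<union> Y) f
                  \<Longrightarrow> equiv X rX \<Longrightarrow> equiv Y rY \<Longrightarrow>
                  (rX \<union> rY \<in> E (X \<union> Y) f \<longleftrightarrow> rX \<in> E X (restr f X) \<and> rY \<in> E Y (restr f Y))"
    and eps_id: "\<And>X f. finite X \<Longrightarrow> Bt X f \<Longrightarrow> Id_on X \<in> E X f"
  shows "finite X \<Longrightarrow> Bt X f \<Longrightarrow> equiv X r \<Longrightarrow>
           (r \<in> E X f \<longleftrightarrow> (\<forall>Y\<in>X//r. Y \<times> Y \<in> E Y (restr f Y)))"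
proof (induction "card X" arbitrary: X f r rule: less_induct)
  case less
  show ?case
  proof (cases "X = {}")
    case True
    have "r \<subseteq> X \<times> X" using less.prems(3) equiv_type by blast
    then have "r = {}" using True by blast
    moreover have "Id_on X = {}" using True by simp
    ultimately have "r \<in> E X f" using eps_id[OF less.prems(1,2)] by simp
    then show ?thesis using True by simp
  next
    case False
    then have "X // r \<noteq> {}" by simp
    then obtain Y where Yq: "Y \<in> X // r" by (meson equals0I)
    let ?X = "X - Y" and ?r = "r \<inter> ((X - Y) \<times> (X - Y))"
    have YX: "Y \<subseteq> X" using quot_subset[OF less.prems(3) Yq] .
    have Yne: "Y \<noteq> {}" using quot_nonempty[OF less.prems(3) Yq] .
    have c: "card ?X < card X" using YX Yne less.prems(1) by (intro psubset_card_mono) auto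
    have e': "equiv ?X ?r" using remove_block(1)[OF less.prems(3) Yq] .
    have q: "?X // ?r = X // r - {Y}" using remove_block(2)[OF less.prems(3) Yq] .
    have rr: "r = ?r \<union> Y \<times> Y" using remove_block(3)[OF less.prems(3) Yq] .
    have u: "?X \<union> Y = X" using YX by blast
    have finX': "finite ?X" using less.prems(1) by blast
    have finY: "finite Y" using finite_subset[OF YX less.prems(1)] .
    have bt': "Bt ?X (restr f ?X)" using Bt_restr[OF less.prems(1) Diff_subset less.prems(2)] .
    have Dl: "(?r \<union> Y \<times> Y \<in> E (?X \<union> Y) f) \<longleftrightarrow> ?r \<in> E ?X (restr f ?X) \<and> Y \<times> Y \<in> E Y (restr f Y)"
      by (rule Delta[OF finX' finY _ _ e' equiv_full]) (blast, use u less.prems(2) in simp)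
    have IH: "?r \<in> E ?X (restr f ?X) \<longleftrightarrow> (\<forall>Z\<in>X//r - {Y}. Z \<times> Z \<in> E Z (restr f Z))"
    proof -
      have "?r \<in> E ?X (restr f ?X) \<longleftrightarrow> (\<forall>Z\<in>?X//?r. Z \<times> Z \<in> E Z (restr (restr f ?X) Z))"
        using less.hyps[OF c finX' bt' e'] .
      also have "\<dots> \<longleftrightarrow> (\<forall>Z\<in>X//r - {Y}. Z \<times> Z \<in> E Z (restr f Z))"
      proof -
        have rZ: "restr (restr f ?X) Z = restr f Z" if Z: "Z \<in> X//r - {Y}" for Z
        proof -
          have "Z \<in> ?X // ?r" using Z q by simp
          then have "Z \<subseteq> ?X" using quot_subset[OF e'] by blast
          then show ?thesis by (rule restr_restr)
        qed
        show ?thesis unfolding q by (rule ball_cong[OF refl]) (simp add: rZ)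
      qed
      finally show ?thesis .
    qed
    have "r \<in> E X f \<longleftrightarrow> (?r \<union> Y \<times> Y \<in> E (?X \<union> Y) f)" unfolding u using rr[symmetric] by simp
    also have "\<dots> \<longleftrightarrow> (\<forall>Z\<in>X//r - {Y}. Z \<times> Z \<in> E Z (restr f Z)) \<and> Y \<times> Y \<in> E Y (restr f Y)"
      using Dl IH by simp
    also have "\<dots> \<longleftrightarrow> (\<forall>Z\<in>X//r. Z \<times> Z \<in> E Z (restr f Z))"
      using Yq by auto
    finally show ?thesis .
  qed
qed

lemma A2:
  fixes Bt :: "nat set \<Rightarrow> bfun \<Rightarrow> bool"
    and E :: "nat set \<Rightarrow> bfun \<Rightarrow> nat rel set"
  assumes Bt_sub: "\<And>X f. finite X \<Longrightarrow> Bt X f \<Longrightarrow> bool_fun X f"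
    and eps_i: "\<And>X f. finite X \<Longrightarrow> Bt X f \<Longrightarrow> sim_i X f \<in> E X f"
    and eps_quot: "\<And>X f r. finite X \<Longrightarrow> Bt X f \<Longrightarrow> r \<in> E X f \<Longrightarrow>
                      modular (quot_set X r) (quot_fun X r f) \<longleftrightarrow> r = sim_i X f"
    and fin: "finite Y" and ne: "Y \<noteq> {}" and bt: "Bt Y g"
  shows "Y \<times> Y \<in> E Y g \<longleftrightarrow> sim_i Y g = Y \<times> Y"
proof
  assume YE: "Y \<times> Y \<in> E Y g"
  have g0: "g {} = 0" using Bt_sub[OF fin bt] unfolding bool_fun_def by simp
  have Q: "quot_set Y (Y \<times> Y) = {set_encode Y}" unfolding quot_set_def quot_full[OF ne] by simp
  have "modular (quot_set Y (Y \<times> Y)) (quot_fun Y (Y \<times> Y) g)"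
    unfolding modular_def Q
  proof (intro allI impI)
    fix A assume "A \<subseteq> {set_encode Y}"
    then consider "A = {}" | "A = {set_encode Y}" by blast
    then show "quot_fun Y (Y \<times> Y) g A = (\<Sum>x\<in>A. quot_fun Y (Y \<times> Y) g {x})"
    proof cases
      case 1 then show ?thesis unfolding quot_fun_def using g0 by simp
    next
      case 2 then show ?thesis by simp
    qed
  qed
  then show "sim_i Y g = Y \<times> Y" using eps_quot[OF fin bt YE] by simp
next
  assume "sim_i Y g = Y \<times> Y"
  then show "Y \<times> Y \<in> E Y g" using eps_i[OF fin bt] by simp
qed

lemma A3:
  assumes fin: "finite Y" and ne: "Y \<noteq> {}" and bf: "bool_fun Y g"
  shows "ic Y g = 1 \<longleftrightarrow> sim_i Y g = Y \<times> Y"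
proof
  let ?s = "sim_i Y g"
  have e: "equiv Y ?s" using sim_i_equiv[OF fin bf] .
  assume "ic Y g = 1"
  then have "card (Y // ?s) = 1" unfolding ic_def .
  then obtain C where C: "Y // ?s = {C}" by (rule card_1_singletonE)
  have CY: "C = Y" using Union_quotient[OF e] C by simp
  show "?s = Y \<times> Y"
  proof
    show "?s \<subseteq> Y \<times> Y" using e equiv_type by blast
    show "Y \<times> Y \<subseteq> ?s"
    proof
      fix p assume "p \<in> Y \<times> Y"
      then obtain x y where xy: "p = (x, y)" "x \<in> Y" "y \<in> Y" by blast
      have "?s `` {x} \<in> Y // ?s" using xy(2) by (rule quotientI)
      then have "?s `` {x} = Y" using C CY by simp
      then show "p \<in> ?s" using xy by blast
    qed
  qed
next
  assume "sim_i Y g = Y \<times> Y"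
  then show "ic Y g = 1" unfolding ic_def using quot_full[OF ne] by simp
qed

lemma ic_pos:
  assumes fin: "finite Y" and ne: "Y \<noteq> {}" and bf: "bool_fun Y g"
  shows "1 \<le> ic Y g"
proof -
  have e: "equiv Y (sim_i Y g)" using sim_i_equiv[OF fin bf] .
  have "finite (Y // sim_i Y g)" using finite_quotient[OF fin equiv_type[OF e]] .
  moreover have "Y // sim_i Y g \<noteq> {}" using ne by simp
  ultimately show ?thesis unfolding ic_def by (simp add: Suc_leI card_gt_0_iff)
qed

lemma sum_ones:
  fixes a :: "'a \<Rightarrow> nat"
  assumes fin: "finite S" and ge: "\<forall>y\<in>S. 1 \<le> a y"
  shows "sum a S = card S \<longleftrightarrow> (\<forall>y\<in>S. a y = 1)"
proof
  assume eq: "sum a S = card S"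
  show "\<forall>y\<in>S. a y = 1"
  proof (rule ccontr)
    assume "\<not> (\<forall>y\<in>S. a y = 1)"
    then obtain y where y: "y \<in> S" "a y \<noteq> 1" by blast
    have "1 \<le> a y" using ge y(1) by blast
    then have "1 < a y" using y(2) by linarith
    then have "\<exists>y\<in>S. (\<lambda>_. 1::nat) y < a y" using y(1) by blast
    then have "(\<Sum>y\<in>S. (1::nat)) < sum a S" using sum_strict_mono_ex1[OF fin, of "\<lambda>_. 1" a] ge by blast
    then show False using eq by simp
  qed
next
  assume "\<forall>y\<in>S. a y = 1"
  then show "sum a S = card S" by simp
qed

theorem proposition3p19:
  fixes Bt :: "nat set \<Rightarrow> bfun \<Rightarrow> bool"
    and E :: "nat set \<Rightarrow> bfun \<Rightarrow> nat rel set"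
  assumes Bt_sub: "\<And>X f. finite X \<Longrightarrow> Bt X f \<Longrightarrow> bool_fun X f"
    and Bt_bij: "\<And>X X' \<sigma> f. finite X \<Longrightarrow> bij_betw \<sigma> X X' \<Longrightarrow> Bt X f \<Longrightarrow> Bt X' (transp X \<sigma> f)"
    and Bt_one: "Bt {} one_bool"
    and Bt_star: "\<And>X Y f g. finite X \<Longrightarrow> finite Y \<Longrightarrow> X \<inter> Y = {} \<Longrightarrow> Bt X f \<Longrightarrow> Bt Y g
                    \<Longrightarrow> Bt (X \<union> Y) (star1 X Y f g)"
    and Bt_restr: "\<And>X Y f. finite X \<Longrightarrow> Y \<subseteq> X \<Longrightarrow> Bt X f \<Longrightarrow> Bt Y (restr f Y)"
    and E_equiv: "\<And>X f r. finite X \<Longrightarrow> Bt X f \<Longrightarrow> r \<in> E X f \<Longrightarrow> equiv X r"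
    and E_bij: "\<And>X X' \<sigma> f. finite X \<Longrightarrow> bij_betw \<sigma> X X' \<Longrightarrow> Bt X f
                   \<Longrightarrow> E X' (transp X \<sigma> f) = transp_rel \<sigma> ` E X f"
    and E_quot: "\<And>X f r. finite X \<Longrightarrow> Bt X f \<Longrightarrow> r \<in> E X f \<Longrightarrow> Bt (quot_set X r) (quot_fun X r f)"
    and star_one: "{} \<in> E {} one_bool"
    and star_E: "\<And>X Y f g. finite X \<Longrightarrow> finite Y \<Longrightarrow> X \<inter> Y = {} \<Longrightarrow> Bt X f \<Longrightarrow> Bt Y g
                   \<Longrightarrow> E (X \<union> Y) (star1 X Y f g) = {rX \<union> rY | rX rY. rX \<in> E X f \<and> rY \<in> E Y g}"
    and delta: "\<And>X f r r'. finite X \<Longrightarrow> Bt X f \<Longrightarrow> equiv X r \<Longrightarrow> equiv X r' \<Longrightarrow> r \<subseteq> r' \<Longrightarrow>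
                  (r \<in> E X f \<and> quot_rel X r r' \<in> E (quot_set X r) (quot_fun X r f))
                  \<longleftrightarrow> (r' \<in> E X f \<and> r \<in> E X (split_fun X r' f))"
    and Delta: "\<And>X Y f rX rY. finite X \<Longrightarrow> finite Y \<Longrightarrow> X \<inter> Y = {} \<Longrightarrow> Bt (X \<union> Y) f
                  \<Longrightarrow> equiv X rX \<Longrightarrow> equiv Y rY \<Longrightarrow>
                  (rX \<union> rY \<in> E (X \<union> Y) f \<longleftrightarrow> rX \<in> E X (restr f X) \<and> rY \<in> E Y (restr f Y))"
    and eps_id: "\<And>X f. finite X \<Longrightarrow> Bt X f \<Longrightarrow> Id_on X \<in> E X f"
    and eps_i: "\<And>X f. finite X \<Longrightarrow> Bt X f \<Longrightarrow> sim_i X f \<in> E X f"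
    and eps_split: "\<And>X f r. finite X \<Longrightarrow> Bt X f \<Longrightarrow> r \<in> E X f \<Longrightarrow>
                      modular X (split_fun X r f) \<longleftrightarrow> r = Id_on X"
    and eps_quot: "\<And>X f r. finite X \<Longrightarrow> Bt X f \<Longrightarrow> r \<in> E X f \<Longrightarrow>
                      modular (quot_set X r) (quot_fun X r f) \<longleftrightarrow> r = sim_i X f"
  shows "\<forall>X f. finite X \<longrightarrow> Bt X f \<longrightarrow> E X f = ES X f \<and> ES X f = EW X f"
proof (intro allI impI)
  fix X f assume fin: "finite X" and bt: "Bt X f"
  have bf: "bool_fun X f" using Bt_sub[OF fin bt] .
  have P3': "\<And>X f r. finite X \<Longrightarrow> Bt X f \<Longrightarrow> equiv X r \<Longrightarrow>
           (r \<in> E X f \<longleftrightarrow> (\<forall>Y\<in>X//r. Y \<times> Y \<in> E Y (restr f Y)))"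
  proof -
    fix X f r assume a: "finite X" "Bt X f" "equiv X r"
    show "r \<in> E X f \<longleftrightarrow> (\<forall>Y\<in>X//r. Y \<times> Y \<in> E Y (restr f Y))"
      by (rule P3[of Bt E X f r, OF _ _ _ a]) (fact Bt_restr, fact Delta, fact eps_id)
  qed
  have A2': "\<And>Y g. finite Y \<Longrightarrow> Y \<noteq> {} \<Longrightarrow> Bt Y g \<Longrightarrow> (Y \<times> Y \<in> E Y g \<longleftrightarrow> sim_i Y g = Y \<times> Y)"
    using A2[of Bt E, OF Bt_sub eps_i eps_quot] by blast
  have blocks: "finite Y \<and> Y \<noteq> {} \<and> Y \<subseteq> X \<and> Bt Y (restr f Y) \<and> bool_fun Y (restr f Y)"
    if e: "equiv X r" and Yq: "Y \<in> X // r" for r Y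
  proof -
    have YX: "Y \<subseteq> X" using quot_subset[OF e Yq] .
    then show ?thesis using quot_nonempty[OF e Yq] finite_subset[OF YX fin]
        Bt_restr[OF fin YX bt] bool_fun_restr[OF bf YX] by blast
  qed
  have EW_eq: "E X f = EW X f"
  proof (rule set_eqI)
    fix r show "r \<in> E X f \<longleftrightarrow> r \<in> EW X f"
    proof (cases "equiv X r")
      case False
      then show ?thesis using E_equiv[OF fin bt] unfolding EW_def by blast
    next
      case True
      have fq: "finite (X // r)" using finite_quotient[OF fin equiv_type[OF True]] .
      have "r \<in> E X f \<longleftrightarrow> (\<forall>Y\<in>X//r. Y \<times> Y \<in> E Y (restr f Y))" using P3'[OF fin bt True] .
      also have "\<dots> \<longleftrightarrow> (\<forall>Y\<in>X//r. sim_i Y (restr f Y) = Y \<times> Y)"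
        by (rule ball_cong[OF refl]) (use blocks[OF True] A2' in blast)
      also have "\<dots> \<longleftrightarrow> (\<forall>Y\<in>X//r. ic Y (restr f Y) = 1)"
        by (rule ball_cong[OF refl]) (use blocks[OF True] A3 in blast)
      also have "\<dots> \<longleftrightarrow> (\<Sum>Y\<in>X//r. ic Y (restr f Y)) = card (X // r)"
        by (rule sum_ones[OF fq, symmetric]) (use blocks[OF True] ic_pos in blast)
      also have "\<dots> \<longleftrightarrow> r \<in> EW X f"
        unfolding EW_def cl_def using ic_split[OF fin True bf] True by simp
      finally show ?thesis .
    qed
  qed
  have E_ES: "E X f \<subseteq> ES X f"
  proof
    fix r assume rE: "r \<in> E X f"
    have e: "equiv X r" using E_equiv[OF fin bt rE] .
    have rEW: "r \<in> EW X f" using EW_eq rE by simp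
    define s where "s = sim_i X f"
    have i: "indec_equiv X f s" unfolding s_def using sim_i_prop[OF fin bf] .
    have es: "equiv X s" and sp: "f = split_fun X s f" using i unfolding indec_equiv_def by auto
    have allY: "\<forall>Y\<in>X//r. Y \<times> Y \<in> E Y (restr f Y)" using P3'[OF fin bt e] rE by blast
    have rs: "r \<subseteq> s"
    proof
      fix p assume p: "p \<in> r"
      obtain x y where xy: "p = (x, y)" by (cases p)
      have xX: "x \<in> X" using p xy e equiv_type by blast
      define Y where "Y = r `` {x}"
      have Yq: "Y \<in> X // r" unfolding Y_def using xX by (rule quotientI)
      have bY: "finite Y" "Y \<noteq> {}" "Y \<subseteq> X" "Bt Y (restr f Y)" "bool_fun Y (restr f Y)"
        using blocks[OF e Yq] by auto
      have "Y \<times> Y \<in> E Y (restr f Y)" using allY Yq by blast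
      then have "sim_i Y (restr f Y) = Y \<times> Y" using A2' bY by blast
      then have "indec_equiv Y (restr f Y) (Y \<times> Y)" using sim_i_prop[OF bY(1) bY(5)] by simp
      then have "indecomposable Y (restr (restr f Y) Y)"
        unfolding indec_equiv_def using quot_full[OF bY(2)] by simp
      then have ind: "indecomposable Y (restr f Y)" using restr_restr[of Y Y f] by simp
      obtain Z where Z: "Z \<in> X // s" "Y \<subseteq> Z"
        using indec_block[OF bf sp es fin bY(3) ind] by blast
      have "x \<in> Y" "y \<in> Y" unfolding Y_def using p xy e xX equiv_class_self by fastforce+
      then have "x \<in> Z" "y \<in> Z" using Z by auto
      obtain z where z: "Z = s `` {z}" "z \<in> X" using Z(1) by (rule quotientE)
      have "(z, x) \<in> s" "(z, y) \<in> s" using \<open>x \<in> Z\<close> \<open>y \<in> Z\<close> z by auto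
      then show "p \<in> s" using es xy unfolding equiv_def sym_def trans_def by blast
    qed
    have sE: "s \<in> E X f" unfolding s_def using eps_i[OF fin bt] .
    have spf: "split_fun X s f = f" using sp by simp
    have "r \<in> E X (split_fun X s f)" using rE spf by simp
    then have qE: "quot_rel X r s \<in> E (quot_set X r) (quot_fun X r f)"
      using delta[OF fin bt e es rs] sE rE by blast
    have btQ: "Bt (quot_set X r) (quot_fun X r f)" using E_quot[OF fin bt rE] .
    have finQ: "finite (quot_set X r)" unfolding quot_set_img using fin by simp
    have "modular (quot_set (quot_set X r) (quot_rel X r s)) (quot_fun (quot_set X r) (quot_rel X r s) (quot_fun X r f))"
      using quot_quot(1)[OF fin bf e i rs] .
    then have qs: "quot_rel X r s = sim_i (quot_set X r) (quot_fun X r f)"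
      using eps_quot[OF finQ btQ qE] by blast
    have "ic (quot_set X r) (quot_fun X r f) = card (quot_set X r // quot_rel X r s)"
      unfolding ic_def qs ..
    also have "\<dots> = card (X // s)" using quot_quot(2)[OF fin bf e i rs] .
    also have "\<dots> = ic X f" unfolding ic_def s_def ..
    finally show "r \<in> ES X f" unfolding ES_def using rEW by blast
  qed
  have "ES X f \<subseteq> EW X f" unfolding ES_def by blast
  then show "E X f = ES X f \<and> ES X f = EW X f" using EW_eq E_ES by blast
qed

end
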